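(* Let $\mathcal N(G,\pi,\mathbf p)$ be any feedforward network with shared weights and ReLU activations, and let $L$ be an objective depending on $\mathbf p$ only through the computed function $f_{\mathbf p}$. Consider the update rule $$p^{(t+1)}_{i} = p^{(t)}_{i} - \frac{\eta}{\kappa_{i}(\mathbf p^{(t)})} \frac{\partial L}{\partial p_{i}}(\mathbf p^{(t)}),\qquad \kappa_{i}(\mathbf p)=\frac{1}{2}\frac{\partial^2 \gamma^2_{\rm net}(\mathbf p)}{\partial p^2_{i}}.$$ This update is invariant to all feasible node-wise rescalings. Moreover, the simpler update rule obtained by using $\kappa^{(1)}_i(\mathbf p)$ in place of $\kappa_i(\mathbf p)$ is also invariant to all feasible node-wise rescalings.
   Context: A feedforward network with shared weights $\mathcal N(G,\pi,\mathbf p)$: $G=(V,E)$ is a directed acyclic graph with input nodes $V_{\rm in}$ and output nodes $V_{\rm out}$, $\mathbf p\in\mathbb R^m$, $\pi:E\to\{1,\dots,m\}$, edge $e$ has weight $w_e=p_{\pi(e)}$, and $E_i=\{e:\pi(e)=i\}$. Input nodes output the corresponding input coordinate; internal nodes compute $h_v=[\sum_{(u\to v)\in E}w_{u\to v}h_u]_+$ with $[z]_+=\max(z,0)$; output nodes compute $h_v=\sum_{(u\to v)\in E}w_{u\to v}h_u$; $f_{\mathbf p}$ is the resulting function. $\mathcal P$ is the set of directed paths $\zeta=(\zeta_0,\dots,\zeta_{\text{len}(\zeta)})$ from input to output nodes, and $\gamma^2_{\rm net}(\mathbf p)=\sum_{\zeta\in\mathcal P}\prod_{j=0}^{\text{len}(\zeta)-1}p^2_{\pi(\zeta_j\to\zeta_{j+1})}$.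 Also $\kappa^{(1)}_{i}(\mathbf p) = \sum_{e\in E_i}\sum_{\zeta \in \mathcal{P}} \mathbf 1_{e\in \zeta} \prod_{j:\, e\neq (\zeta_j\rightarrow \zeta_{j+1})} p^2_{\pi(\zeta_j\rightarrow \zeta_{j+1})}$. A node-wise rescaling is given by $\beta_v>0$ for internal nodes ($\beta_v=1$ for input and output nodes) and maps $w_{u\to v}\mapsto(\beta_v/\beta_u)w_{u\to v}$; it is feasible if edges sharing a parameter remain equal after the transformation, so it induces a transformation $\mathcal T$ of the parameter vector. An update rule $\mathcal A$ (mapping $\mathbf p^{(t)}$ to $\mathbf p^{(t+1)}$) is invariant to $\mathcal T$ if $f_{\mathcal A(\mathbf p)}=f_{\mathcal A(\mathcal T(\mathbf p))}$ for every $\mathbf p$. *)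

theory Defs
  imports "HOL-Analysis.Analysis"
begin

text \<open>Nodes have type 'v, parameters are indexed by a finite type 'p (so p :: 'p => real is a
  vector in R^m with m = CARD('p)); pi maps edges to parameter indices; the weight of
  edge e is p (pi e).\<close>

definition ff_net :: "'v set \<Rightarrow> 'v set \<Rightarrow> 'v set \<Rightarrow> ('v \<times> 'v) set \<Rightarrow> bool" where
  "ff_net V Vin Vout E \<longleftrightarrow> finite V \<and> E \<subseteq> V \<times> V \<and> acyclic E \<and>
     Vin \<subseteq> V \<and> Vout \<subseteq> V \<and> Vin \<inter> Vout = {}"

definition preds :: "('v \<times> 'v) set \<Rightarrow> 'v \<Rightarrow> 'v set" where
  "preds E v = {u. (u, v) \<in> E}"

definition node_eq :: "'v set \<Rightarrow> 'v set \<Rightarrow> 'v set \<Rightarrow> ('v \<times> 'v) set \<Rightarrow> ('v \<times> 'v \<Rightarrow> 'p)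
    \<Rightarrow> ('p \<Rightarrow> real) \<Rightarrow> ('v \<Rightarrow> real) \<Rightarrow> ('v \<Rightarrow> real) \<Rightarrow> 'v \<Rightarrow> real" where
  "node_eq V Vin Vout E \<pi> p x h v =
     (if v \<notin> V then 0
      else if v \<in> Vin then x v
      else (let s = (\<Sum>u\<in>preds E v. p (\<pi> (u, v)) * h u)
            in if v \<in> Vout then s else max s 0))"

text \<open>Node outputs h_v: the (unique, since G is a DAG) solution of the node equations.\<close>
definition node_val :: "'v set \<Rightarrow> 'v set \<Rightarrow> 'v set \<Rightarrow> ('v \<times> 'v) set \<Rightarrow> ('v \<times> 'v \<Rightarrow> 'p)
    \<Rightarrow> ('p \<Rightarrow> real) \<Rightarrow> ('v \<Rightarrow> real) \<Rightarrow> 'v \<Rightarrow> real" where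
  "node_val V Vin Vout E \<pi> p x = (THE h. \<forall>v. h v = node_eq V Vin Vout E \<pi> p x h v)"

text \<open>The computed function f_p: input x (only its values on Vin matter) to the vector of
  output-node values (set to 0 off Vout).\<close>
definition net_fun :: "'v set \<Rightarrow> 'v set \<Rightarrow> 'v set \<Rightarrow> ('v \<times> 'v) set \<Rightarrow> ('v \<times> 'v \<Rightarrow> 'p)
    \<Rightarrow> ('p \<Rightarrow> real) \<Rightarrow> ('v \<Rightarrow> real) \<Rightarrow> 'v \<Rightarrow> real" where
  "net_fun V Vin Vout E \<pi> p = (\<lambda>x v. if v \<in> Vout then node_val V Vin Vout E \<pi> p x v else 0)"

text \<open>Directed input-to-output paths, as node lists zeta_0 ... zeta_len (len = length - 1).\<close>
definition net_paths :: "'v set \<Rightarrow> 'v set \<Rightarrow> ('v \<times> 'v) set \<Rightarrow> 'v list set" where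
  "net_paths Vin Vout E = {\<zeta>. \<zeta> \<noteq> [] \<and> hd \<zeta> \<in> Vin \<and> last \<zeta> \<in> Vout \<and>
      (\<forall>j. Suc j < length \<zeta> \<longrightarrow> (\<zeta> ! j, \<zeta> ! Suc j) \<in> E)}"

definition path_edge :: "'v list \<Rightarrow> nat \<Rightarrow> 'v \<times> 'v" where
  "path_edge \<zeta> j = (\<zeta> ! j, \<zeta> ! Suc j)"

definition gamma2 :: "'v set \<Rightarrow> 'v set \<Rightarrow> ('v \<times> 'v) set \<Rightarrow> ('v \<times> 'v \<Rightarrow> 'p)
    \<Rightarrow> ('p \<Rightarrow> real) \<Rightarrow> real" where
  "gamma2 Vin Vout E \<pi> p =
     (\<Sum>\<zeta>\<in>net_paths Vin Vout E. \<Prod>j<length \<zeta> - 1. (p (\<pi> (path_edge \<zeta> j)))\<^sup>2)"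

definition kappa :: "'v set \<Rightarrow> 'v set \<Rightarrow> ('v \<times> 'v) set \<Rightarrow> ('v \<times> 'v \<Rightarrow> 'p)
    \<Rightarrow> 'p \<Rightarrow> ('p \<Rightarrow> real) \<Rightarrow> real" where
  "kappa Vin Vout E \<pi> i p =
     deriv (deriv (\<lambda>t. gamma2 Vin Vout E \<pi> (p(i := t)))) (p i) / 2"

definition kappa1 :: "'v set \<Rightarrow> 'v set \<Rightarrow> ('v \<times> 'v) set \<Rightarrow> ('v \<times> 'v \<Rightarrow> 'p)
    \<Rightarrow> 'p \<Rightarrow> ('p \<Rightarrow> real) \<Rightarrow> real" where
  "kappa1 Vin Vout E \<pi> i p =
     (\<Sum>e\<in>{e\<in>E. \<pi> e = i}. \<Sum>\<zeta>\<in>net_paths Vin Vout E.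
        (if \<exists>j<length \<zeta> - 1. path_edge \<zeta> j = e then 1 else 0) *
        (\<Prod>j\<in>{j. j < length \<zeta> - 1 \<and> e \<noteq> path_edge \<zeta> j}. (p (\<pi> (path_edge \<zeta> j)))\<^sup>2))"

definition partial :: "(('p \<Rightarrow> real) \<Rightarrow> real) \<Rightarrow> 'p \<Rightarrow> ('p \<Rightarrow> real) \<Rightarrow> real" where
  "partial L i p = deriv (\<lambda>t. L (p(i := t))) (p i)"

definition scaled_update :: "('p \<Rightarrow> ('p \<Rightarrow> real) \<Rightarrow> real) \<Rightarrow> (('p \<Rightarrow> real) \<Rightarrow> real) \<Rightarrow> real
    \<Rightarrow> ('p \<Rightarrow> real) \<Rightarrow> ('p \<Rightarrow> real)" where
  "scaled_update k L \<eta> p = (\<lambda>i. p i - \<eta> / k i p * partial L i p)"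

text \<open>Node-wise rescaling beta: positive on internal nodes, 1 on input/output nodes;
  feasible if edges sharing a parameter are multiplied by the same factor.\<close>
definition feasible_rescaling :: "'v set \<Rightarrow> 'v set \<Rightarrow> 'v set \<Rightarrow> ('v \<times> 'v) set
    \<Rightarrow> ('v \<times> 'v \<Rightarrow> 'p) \<Rightarrow> ('v \<Rightarrow> real) \<Rightarrow> bool" where
  "feasible_rescaling V Vin Vout E \<pi> \<beta> \<longleftrightarrow>
     (\<forall>v\<in>V - Vin - Vout. \<beta> v > 0) \<and> (\<forall>v\<in>Vin \<union> Vout. \<beta> v = 1) \<and>
     (\<forall>e1\<in>E. \<forall>e2\<in>E. \<pi> e1 = \<pi> e2 \<longrightarrow>
        \<beta> (snd e1) / \<beta> (fst e1) = \<beta> (snd e2) / \<beta> (fst e2))"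

definition rescale_params :: "('v \<times> 'v) set \<Rightarrow> ('v \<times> 'v \<Rightarrow> 'p) \<Rightarrow> ('v \<Rightarrow> real)
    \<Rightarrow> ('p \<Rightarrow> real) \<Rightarrow> ('p \<Rightarrow> real)" where
  "rescale_params E \<pi> \<beta> p = (\<lambda>i. if \<exists>e\<in>E. \<pi> e = i
      then (let e = (SOME e. e \<in> E \<and> \<pi> e = i) in \<beta> (snd e) / \<beta> (fst e)) * p i
      else p i)"

definition invariant_to :: "'v set \<Rightarrow> 'v set \<Rightarrow> 'v set \<Rightarrow> ('v \<times> 'v) set \<Rightarrow> ('v \<times> 'v \<Rightarrow> 'p)
    \<Rightarrow> (('p \<Rightarrow> real) \<Rightarrow> ('p \<Rightarrow> real)) \<Rightarrow> (('p \<Rightarrow> real) \<Rightarrow> ('p \<Rightarrow> real)) \<Rightarrow> bool" where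
  "invariant_to V Vin Vout E \<pi> A T \<longleftrightarrow>
     (\<forall>p. net_fun V Vin Vout E \<pi> (A p) = net_fun V Vin Vout E \<pi> (A (T p)))"

end

theory Submission
  imports Defs "HOL-Computational_Algebra.Polynomial"
begin


lemma node_eq_cong:
  assumes "\<And>u. (u, v) \<in> E \<Longrightarrow> h u = g u"
  shows "node_eq V Vin Vout E \<pi> p x h v = node_eq V Vin Vout E \<pi> p x g v"
proof -
  have "(\<Sum>u\<in>preds E v. p (\<pi> (u, v)) * h u) = (\<Sum>u\<in>preds E v. p (\<pi> (u, v)) * g u)"
    by (rule sum.cong) (auto simp: preds_def assms)
  then show ?thesis by (simp add: node_eq_def)
qed

lemma net_wf:
  assumes "ff_net V Vin Vout E" shows "wf E"
proof -
  have "finite E" using assms unfolding ff_net_def by (meson finite_SigmaI finite_subset)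
  then show ?thesis using assms finite_acyclic_wf unfolding ff_net_def by blast
qed

lemma node_eq_unique:
  assumes "ff_net V Vin Vout E"
  shows "\<exists>!h. \<forall>v. h v = node_eq V Vin Vout E \<pi> p x h v"
proof -
  have wf: "wf E" using net_wf[OF assms] .
  let ?F = "\<lambda>h v. node_eq V Vin Vout E \<pi> p x h v"
  have adm: "adm_wf E ?F"
    unfolding adm_wf_def by (auto intro: node_eq_cong)
  have ex: "\<forall>v. wfrec E ?F v = ?F (wfrec E ?F) v"
    using wfrec_fixpoint[OF wf adm] by (metis)
  have un: "h = g" if h: "\<forall>v. h v = ?F h v" and g: "\<forall>v. g v = ?F g v" for h g
  proof
    fix v show "h v = g v"
    proof (induction v rule: wf_induct[OF wf])
      case (1 v)
      then have "?F h v = ?F g v" by (intro node_eq_cong) auto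
      then show ?case using h g by metis
    qed
  qed
  show ?thesis using ex un by blast
qed

lemma node_val_eq:
  assumes "ff_net V Vin Vout E"
  shows "\<forall>v. node_val V Vin Vout E \<pi> p x v = node_eq V Vin Vout E \<pi> p x (node_val V Vin Vout E \<pi> p x) v"
  unfolding node_val_def using theI'[OF node_eq_unique[OF assms, of \<pi> p x]] by simp

lemma node_val_unique:
  assumes "ff_net V Vin Vout E" "\<forall>v. h v = node_eq V Vin Vout E \<pi> p x h v"
  shows "node_val V Vin Vout E \<pi> p x = h"
  unfolding node_val_def by (rule the1_equality[OF node_eq_unique[OF assms(1)]]) (use assms(2) in simp)

lemma net_fun_scale:
  assumes net: "ff_net V Vin Vout E"
    and cE: "\<forall>e\<in>E. c (\<pi> e) = \<beta> (snd e) / \<beta> (fst e)"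
    and bpos: "\<forall>v\<in>V. \<beta> v > 0"
    and b1: "\<forall>v\<in>Vin \<union> Vout. \<beta> v = 1"
  shows "net_fun V Vin Vout E \<pi> (\<lambda>i. c i * q i) = net_fun V Vin Vout E \<pi> q"
proof (rule ext)+
  fix x w
  let ?h = "node_val V Vin Vout E \<pi> q x"
  define h' where "h' = (\<lambda>v. (if v \<in> V then \<beta> v else 1) * ?h v)"
  have EV: "E \<subseteq> V \<times> V" and VinV: "Vin \<subseteq> V" and VoutV: "Vout \<subseteq> V"
    using net unfolding ff_net_def by auto
  have hs: "\<forall>v. ?h v = node_eq V Vin Vout E \<pi> q x ?h v" using node_val_eq[OF net] .
  have "\<forall>v. h' v = node_eq V Vin Vout E \<pi> (\<lambda>i. c i * q i) x h' v"
  proof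
    fix v
    show "h' v = node_eq V Vin Vout E \<pi> (\<lambda>i. c i * q i) x h' v"
    proof (cases "v \<in> V")
      case False
      then show ?thesis using hs[rule_format, of v] by (simp add: h'_def node_eq_def)
    next
      case vV: True
      show ?thesis
      proof (cases "v \<in> Vin")
        case True
        then show ?thesis using hs[rule_format, of v] vV b1 by (simp add: h'_def node_eq_def)
      next
        case nin: False
        have sum: "(\<Sum>u\<in>preds E v. c (\<pi> (u, v)) * q (\<pi> (u, v)) * h' u)
             = \<beta> v * (\<Sum>u\<in>preds E v. q (\<pi> (u, v)) * ?h u)"
          unfolding sum_distrib_left
        proof (rule sum.cong)
          fix u assume "u \<in> preds E v"
          then have uv: "(u, v) \<in> E" by (simp add: preds_def)
          then have "u \<in> V" using EV by auto
          then have "\<beta> u > 0" using bpos by auto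
          then show "c (\<pi> (u, v)) * q (\<pi> (u, v)) * h' u = \<beta> v * (q (\<pi> (u, v)) * ?h u)"
            using cE uv \<open>u \<in> V\<close> by (simp add: h'_def)
        qed simp
        show ?thesis
        proof (cases "v \<in> Vout")
          case True
          then show ?thesis using hs[rule_format, of v] vV nin b1 sum
            by (simp add: h'_def node_eq_def Let_def)
        next
          case False
          have bv: "\<beta> v > 0" using bpos vV by auto
          have "max (\<beta> v * s) 0 = \<beta> v * max s 0" for s
            using bv by (simp add: max_def mult_le_0_iff)
          then show ?thesis using hs[rule_format, of v] vV nin False sum
            by (simp add: h'_def node_eq_def Let_def)
        qed
      qed
    qed
  qed
  then have "node_val V Vin Vout E \<pi> (\<lambda>i. c i * q i) x = h'" using node_val_unique[OF net] by blast
  then show "net_fun V Vin Vout E \<pi> (\<lambda>i. c i * q i) x w = net_fun V Vin Vout E \<pi> q x w"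
    using VoutV b1 by (auto simp: net_fun_def h'_def)
qed



lemma path_edge_in:
  "\<zeta> \<in> net_paths Vin Vout E \<Longrightarrow> j < length \<zeta> - 1 \<Longrightarrow> path_edge \<zeta> j \<in> E"
  unfolding net_paths_def path_edge_def by auto

lemma path_nodes_V:
  assumes net: "ff_net V Vin Vout E" and z: "\<zeta> \<in> net_paths Vin Vout E" and k: "k < length \<zeta>"
  shows "\<zeta> ! k \<in> V"
proof (cases k)
  case 0
  then show ?thesis using z net unfolding net_paths_def ff_net_def by (auto simp: hd_conv_nth)
next
  case (Suc j)
  then have "(\<zeta> ! j, \<zeta> ! k) \<in> E" using z k unfolding net_paths_def by auto
  then show ?thesis using net unfolding ff_net_def by auto
qed

lemma telescope:
  fixes c :: "'p \<Rightarrow> real" and \<beta> :: "'v \<Rightarrow> real"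
  assumes net: "ff_net V Vin Vout E" and z: "\<zeta> \<in> net_paths Vin Vout E"
    and cE: "\<forall>e\<in>E. c (\<pi> e) = \<beta> (snd e) / \<beta> (fst e)"
    and bpos: "\<forall>v\<in>V. \<beta> v > 0"
  shows "n \<le> length \<zeta> - 1 \<Longrightarrow> (\<Prod>j<n. c (\<pi> (path_edge \<zeta> j))) = \<beta> (\<zeta> ! n) / \<beta> (\<zeta> ! 0)"
proof (induction n)
  case 0
  have "\<zeta> \<noteq> []" using z by (simp add: net_paths_def)
  then have "\<zeta> ! 0 \<in> V" using path_nodes_V[OF net z] by simp
  then have "\<beta> (\<zeta> ! 0) > 0" using bpos by auto
  then show ?case by simp
next
  case (Suc n)
  have e: "path_edge \<zeta> n \<in> E" using path_edge_in[OF z] Suc.prems by simp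
  have "\<zeta> ! n \<in> V" using path_nodes_V[OF net z] Suc.prems by simp
  then have "\<beta> (\<zeta> ! n) > 0" using bpos by auto
  then show ?case using Suc e cE by (simp add: path_edge_def)
qed

lemma telescope_full:
  fixes c :: "'p \<Rightarrow> real" and \<beta> :: "'v \<Rightarrow> real"
  assumes net: "ff_net V Vin Vout E" and z: "\<zeta> \<in> net_paths Vin Vout E"
    and cE: "\<forall>e\<in>E. c (\<pi> e) = \<beta> (snd e) / \<beta> (fst e)"
    and bpos: "\<forall>v\<in>V. \<beta> v > 0"
    and b1: "\<forall>v\<in>Vin \<union> Vout. \<beta> v = 1"
  shows "(\<Prod>j<length \<zeta> - 1. c (\<pi> (path_edge \<zeta> j))) = 1"
proof -
  have ne: "\<zeta> \<noteq> []" and hd: "hd \<zeta> \<in> Vin" and la: "last \<zeta> \<in> Vout" using z by (auto simp: net_paths_def)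
  have "\<zeta> ! 0 = hd \<zeta>" "\<zeta> ! (length \<zeta> - 1) = last \<zeta>" using ne by (auto simp: hd_conv_nth last_conv_nth)
  then show ?thesis using telescope[of V Vin Vout E \<zeta> c \<pi> \<beta> "length \<zeta> - 1"] net z cE bpos hd la b1 by simp
qed

lemma path_trancl:
  assumes z: "\<zeta> \<in> net_paths Vin Vout E"
  shows "a < b \<Longrightarrow> b < length \<zeta> \<Longrightarrow> (\<zeta> ! a, \<zeta> ! b) \<in> E\<^sup>+"
proof (induction b)
  case 0 then show ?case by simp
next
  case (Suc b)
  have e: "(\<zeta> ! b, \<zeta> ! Suc b) \<in> E" using z Suc.prems unfolding net_paths_def by auto
  show ?case
  proof (cases "a = b")
    case True then show ?thesis using e by auto
  next
    case False
    then have "(\<zeta> ! a, \<zeta> ! b) \<in> E\<^sup>+" using Suc by auto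
    then show ?thesis using e by (meson trancl.trancl_into_trancl)
  qed
qed

lemma path_edge_inj:
  assumes net: "ff_net V Vin Vout E" and z: "\<zeta> \<in> net_paths Vin Vout E"
    and j: "j1 < length \<zeta> - 1" "j2 < length \<zeta> - 1" and eq: "path_edge \<zeta> j1 = path_edge \<zeta> j2"
  shows "j1 = j2"
proof (rule ccontr)
  assume ne: "j1 \<noteq> j2"
  have ac: "acyclic E" using net by (simp add: ff_net_def)
  have eqn: "\<zeta> ! j1 = \<zeta> ! j2" using eq by (simp add: path_edge_def)
  show False
  proof (cases "j1 < j2")
    case True
    then have "(\<zeta> ! j1, \<zeta> ! j2) \<in> E\<^sup>+" using path_trancl[OF z] j by auto
    then show False using ac eqn by (simp add: acyclic_def)
  next
    case False
    then have "(\<zeta> ! j2, \<zeta> ! j1) \<in> E\<^sup>+" using path_trancl[OF z] j ne by auto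
    then show False using ac eqn by (simp add: acyclic_def)
  qed
qed

definition ispoly :: "(real \<Rightarrow> real) \<Rightarrow> bool" where
  "ispoly f \<longleftrightarrow> (\<exists>P. \<forall>t. f t = poly P t)"

lemma ispoly_const: "ispoly (\<lambda>t. k)"
  unfolding ispoly_def by (rule exI[of _ "[:k:]"]) simp

lemma ispoly_id: "ispoly (\<lambda>t. t)"
  unfolding ispoly_def by (rule exI[of _ "[:0, 1:]"]) simp

lemma ispoly_mult: "ispoly f \<Longrightarrow> ispoly g \<Longrightarrow> ispoly (\<lambda>t. f t * g t)"
  unfolding ispoly_def by (metis poly_mult)

lemma ispoly_add: "ispoly f \<Longrightarrow> ispoly g \<Longrightarrow> ispoly (\<lambda>t. f t + g t)"
  unfolding ispoly_def by (metis poly_add)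

lemma ispoly_sum_fin: "finite A \<Longrightarrow> (\<forall>a\<in>A. ispoly (f a)) \<longrightarrow> ispoly (\<lambda>t. \<Sum>a\<in>A. f a t)"
  by (induction A rule: finite_induct) (auto intro: ispoly_const ispoly_add)

lemma ispoly_sum: "(\<And>a. a \<in> A \<Longrightarrow> ispoly (f a)) \<Longrightarrow> ispoly (\<lambda>t. \<Sum>a\<in>A. f a t)"
  by (cases "finite A") (auto simp: ispoly_const ispoly_sum_fin)

lemma ispoly_prod_fin: "finite A \<Longrightarrow> (\<forall>a\<in>A. ispoly (f a)) \<longrightarrow> ispoly (\<lambda>t. \<Prod>a\<in>A. f a t)"
  by (induction A rule: finite_induct) (auto intro: ispoly_const ispoly_mult)

lemma ispoly_prod: "(\<And>a. a \<in> A \<Longrightarrow> ispoly (f a)) \<Longrightarrow> ispoly (\<lambda>t. \<Prod>a\<in>A. f a t)"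
  by (cases "finite A") (auto simp: ispoly_const ispoly_prod_fin)

lemma ispoly_upd: "ispoly (\<lambda>t. ((p(i := t)) k)^2)"
proof (cases "k = i")
  case True
  then show ?thesis using ispoly_mult[OF ispoly_id ispoly_id] by (simp add: power2_eq_square)
qed (simp add: ispoly_const)

lemma gamma2_poly: "ispoly (\<lambda>t. gamma2 Vin Vout E \<pi> (p(i := t)))"
  unfolding gamma2_def by (intro ispoly_sum ispoly_prod ispoly_upd)

lemma deriv_scaled:
  fixes P :: "real poly" assumes c: "c \<noteq> 0"
  shows "deriv (\<lambda>t. a * poly P (t / c)) = (\<lambda>t. a / c * poly (pderiv P) (t / c))"
proof
  fix t
  have "DERIV (\<lambda>t. poly P (t / c)) t :> poly (pderiv P) (t / c) * (1 / c)"
    by (rule DERIV_chain2[OF poly_DERIV]) (use c in \<open>auto intro!: derivative_eq_intros\<close>)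
  then have "DERIV (\<lambda>t. a * poly P (t / c)) t :> a * (poly (pderiv P) (t / c) * (1 / c))"
    by (rule DERIV_cmult)
  then show "deriv (\<lambda>t. a * poly P (t / c)) t = a / c * poly (pderiv P) (t / c)"
    by (rule DERIV_imp_deriv[THEN trans]) simp
qed

lemma deriv2_scaled:
  fixes f :: "real \<Rightarrow> real" assumes c: "c \<noteq> 0" and f: "ispoly f"
  shows "deriv (deriv (\<lambda>t. f (t / c))) (c * x) = deriv (deriv f) x / c^2"
proof -
  obtain P where P: "\<And>t. f t = poly P t" using f unfolding ispoly_def by blast
  have fe: "f = (\<lambda>t. 1 * poly P (t / 1))" using P by auto
  have fe2: "(\<lambda>t. f (t / c)) = (\<lambda>t. 1 * poly P (t / c))" using P by auto
  have d1: "deriv (\<lambda>t. 1 * poly P (t/c)) = (\<lambda>t. 1/c * poly (pderiv P)(t/c))" by (rule deriv_scaled[OF c])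
  have d2: "deriv (\<lambda>t. 1/c * poly (pderiv P) (t/c)) = (\<lambda>t. 1/c/c * poly (pderiv (pderiv P)) (t/c))" by (rule deriv_scaled[OF c])
  have d3: "deriv (\<lambda>t. 1 * poly P (t/1)) = (\<lambda>t. 1/1 * poly (pderiv P)(t/1))" by (rule deriv_scaled) simp
  have d4: "deriv (\<lambda>t. 1/1 * poly (pderiv P) (t/1)) = (\<lambda>t. 1/1/1 * poly (pderiv (pderiv P)) (t/1))" by (rule deriv_scaled) simp
  have r: "deriv (deriv f) x = poly (pderiv (pderiv P)) x" unfolding fe d3 d4 by simp
  show ?thesis unfolding r unfolding fe2 d1 d2
    using c by (simp add: power2_eq_square)
qed



lemma upd_shift:
  fixes c :: "'p \<Rightarrow> real" assumes "c i \<noteq> 0"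
  shows "(\<lambda>j. c j * p j)(i := t) = (\<lambda>j. c j * (p(i := t / c i)) j)"
  using assms by (auto simp: fun_eq_iff)

locale resc =
  fixes V Vin Vout :: "'v set" and E :: "('v \<times> 'v) set" and \<pi> :: "'v \<times> 'v \<Rightarrow> 'p"
    and c :: "'p \<Rightarrow> real" and \<beta> :: "'v \<Rightarrow> real"
  assumes net: "ff_net V Vin Vout E"
    and cE: "\<forall>e\<in>E. c (\<pi> e) = \<beta> (snd e) / \<beta> (fst e)"
    and bpos: "\<forall>v\<in>V. \<beta> v > 0"
    and b1: "\<forall>v\<in>Vin \<union> Vout. \<beta> v = 1"
    and cpos: "\<forall>i. c i > 0"
begin

lemma nf: "net_fun V Vin Vout E \<pi> (\<lambda>i. c i * q i) = net_fun V Vin Vout E \<pi> q"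
  by (rule net_fun_scale[where c=c and \<beta>=\<beta> and \<pi>=\<pi> and q=q, OF net cE bpos b1])

lemma gamma2_scale: "gamma2 Vin Vout E \<pi> (\<lambda>j. c j * q j) = gamma2 Vin Vout E \<pi> q"
  unfolding gamma2_def
proof (rule sum.cong)
  fix \<zeta> assume z: "\<zeta> \<in> net_paths Vin Vout E"
  have "(\<Prod>j<length \<zeta> - 1. (c (\<pi> (path_edge \<zeta> j)) * q (\<pi> (path_edge \<zeta> j)))\<^sup>2)
     = (\<Prod>j<length \<zeta> - 1. c (\<pi> (path_edge \<zeta> j)))\<^sup>2 * (\<Prod>j<length \<zeta> - 1. (q (\<pi> (path_edge \<zeta> j)))\<^sup>2)"
    by (simp add: power_mult_distrib prod.distrib prod_power_distrib)
  then show "(\<Prod>j<length \<zeta> - 1. (c (\<pi> (path_edge \<zeta> j)) * q (\<pi> (path_edge \<zeta> j)))\<^sup>2)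
     = (\<Prod>j<length \<zeta> - 1. (q (\<pi> (path_edge \<zeta> j)))\<^sup>2)"
    using telescope_full[where c=c and \<beta>=\<beta> and \<pi>=\<pi>, OF net z cE bpos b1] by simp
qed simp

lemma kappa_scale: "kappa Vin Vout E \<pi> i (\<lambda>j. c j * p j) = kappa Vin Vout E \<pi> i p / (c i)^2"
proof -
  have ci: "c i \<noteq> 0" using cpos by (metis less_irrefl)
  have f: "(\<lambda>t. gamma2 Vin Vout E \<pi> ((\<lambda>j. c j * p j)(i := t)))
      = (\<lambda>t. (\<lambda>s. gamma2 Vin Vout E \<pi> (p(i := s))) (t / c i))"
    unfolding upd_shift[where c=c and i=i, OF ci] gamma2_scale ..
  show ?thesis unfolding kappa_def f
    using deriv2_scaled[OF ci gamma2_poly, of Vin Vout E \<pi> p i "p i"] by simp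
qed

lemma partial_scale:
  assumes L_through_f: "\<And>p q. net_fun V Vin Vout E \<pi> p = net_fun V Vin Vout E \<pi> q \<Longrightarrow> L p = L q"
    and L_diff: "\<And>p i. (\<lambda>t. L (p(i := t))) differentiable (at (p i))"
  shows "partial L i (\<lambda>j. c j * p j) = partial L i p / c i"
proof -
  have ci: "c i \<noteq> 0" using cpos by (metis less_irrefl)
  define l where "l = (\<lambda>s. L (p(i := s)))"
  have f: "(\<lambda>t. L ((\<lambda>j. c j * p j)(i := t))) = (\<lambda>t. l (t / c i))"
    unfolding upd_shift[where c=c and i=i, OF ci] l_def by (intro ext L_through_f nf)
  have "DERIV l (p i) :> deriv l (p i)"
    using L_diff[of p i] unfolding l_def by (simp add: DERIV_deriv_iff_real_differentiable)
  then have d: "DERIV l (c i * p i / c i) :> deriv l (p i)" using ci by simp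
  have "DERIV (\<lambda>t. l (t / c i)) (c i * p i) :> deriv l (p i) * (1 / c i)"
    by (rule DERIV_chain2[where f=l and g="\<lambda>t. t / c i", OF d]) (use ci in \<open>auto intro!: derivative_eq_intros\<close>)
  then have "deriv (\<lambda>t. l (t / c i)) (c i * p i) = deriv l (p i) / c i"
    by (simp add: DERIV_imp_deriv)
  then show ?thesis unfolding partial_def f l_def by simp
qed

lemma kappa1_scale: "kappa1 Vin Vout E \<pi> i (\<lambda>j. c j * p j) = kappa1 Vin Vout E \<pi> i p / (c i)^2"
  unfolding kappa1_def sum_divide_distrib
proof (intro sum.cong refl)
  fix e \<zeta> assume e: "e \<in> {e \<in> E. \<pi> e = i}" and z: "\<zeta> \<in> net_paths Vin Vout E"
  let ?n = "length \<zeta> - 1"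
  let ?S = "{j. j < ?n \<and> e \<noteq> path_edge \<zeta> j}"
  let ?X = "\<lambda>j. c (\<pi> (path_edge \<zeta> j))"
  let ?Q = "\<lambda>j. (p (\<pi> (path_edge \<zeta> j)))\<^sup>2"
  show "(if \<exists>j<?n. path_edge \<zeta> j = e then 1 else 0) *
          (\<Prod>j\<in>?S. (c (\<pi> (path_edge \<zeta> j)) * p (\<pi> (path_edge \<zeta> j)))\<^sup>2) =
        (if \<exists>j<?n. path_edge \<zeta> j = e then 1 else 0) * (\<Prod>j\<in>?S. ?Q j) / (c i)\<^sup>2"
  proof (cases "\<exists>j<?n. path_edge \<zeta> j = e")
    case False then show ?thesis by auto
  next
    case True
    then obtain j0 where j0: "j0 < ?n" "path_edge \<zeta> j0 = e" by blast
    have Seq: "?S = {..<?n} - {j0}"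
      using path_edge_inj[OF net z] j0 by auto
    have "(\<Prod>j<?n. ?X j) = ?X j0 * (\<Prod>j\<in>{..<?n} - {j0}. ?X j)"
      using j0 by (simp add: prod.remove)
    moreover have "?X j0 = c i" using j0 e by simp
    ultimately have "(\<Prod>j\<in>?S. ?X j) = 1 / c i"
      using telescope_full[where c=c and \<beta>=\<beta> and \<pi>=\<pi>, OF net z cE bpos b1] Seq cpos
      by (metis nonzero_eq_divide_eq less_irrefl mult.commute)
    moreover have "(\<Prod>j\<in>?S. (?X j * p (\<pi> (path_edge \<zeta> j)))\<^sup>2) = (\<Prod>j\<in>?S. ?X j)\<^sup>2 * (\<Prod>j\<in>?S. ?Q j)"
      by (simp add: power_mult_distrib prod.distrib prod_power_distrib)
    ultimately show ?thesis using True by (simp add: power_divide)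
  qed
qed

lemma update_scale:
  assumes K: "\<And>i p. K i (\<lambda>j. c j * p j) = K i p / (c i)^2"
    and P: "\<And>i p. partial L i (\<lambda>j. c j * p j) = partial L i p / c i"
  shows "scaled_update K L \<eta> (\<lambda>j. c j * p j) = (\<lambda>j. c j * scaled_update K L \<eta> p j)"
proof
  fix i
  have ci: "c i \<noteq> 0" using cpos by (metis less_irrefl)
  show "scaled_update K L \<eta> (\<lambda>j. c j * p j) i = c i * scaled_update K L \<eta> p i"
    unfolding scaled_update_def K P
    using ci by (cases "K i p = 0") (simp_all add: field_simps power2_eq_square)
qed

lemma invariant:
  assumes K: "\<And>i p. K i (\<lambda>j. c j * p j) = K i p / (c i)^2"
    and P: "\<And>i p. partial L i (\<lambda>j. c j * p j) = partial L i p / c i"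
  shows "invariant_to V Vin Vout E \<pi> (scaled_update K L \<eta>) (\<lambda>p j. c j * p j)"
  unfolding invariant_to_def update_scale[where K=K and L=L, OF K P] nf by simp

end


theorem theorem2:
  fixes V Vin Vout :: "'v set" and E :: "('v \<times> 'v) set" and \<pi> :: "'v \<times> 'v \<Rightarrow> 'p::finite"
    and L :: "('p \<Rightarrow> real) \<Rightarrow> real" and \<eta> :: real
  assumes net: "ff_net V Vin Vout E"
    and L_through_f: "\<And>p q. net_fun V Vin Vout E \<pi> p = net_fun V Vin Vout E \<pi> q \<Longrightarrow> L p = L q"
    and L_diff: "\<And>p i. (\<lambda>t. L (p(i := t))) differentiable (at (p i))"
  shows "\<forall>\<beta>. feasible_rescaling V Vin Vout E \<pi> \<beta> \<longrightarrow>
           invariant_to V Vin Vout E \<pi> (scaled_update (kappa Vin Vout E \<pi>) L \<eta>)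
             (rescale_params E \<pi> \<beta>) \<and>
           invariant_to V Vin Vout E \<pi> (scaled_update (kappa1 Vin Vout E \<pi>) L \<eta>)
             (rescale_params E \<pi> \<beta>)"
proof (intro allI impI)
  fix \<beta> :: "'v \<Rightarrow> real"
  assume feas: "feasible_rescaling V Vin Vout E \<pi> \<beta>"
  define c where "c = (\<lambda>i. if \<exists>e\<in>E. \<pi> e = i
      then (let e = (SOME e. e \<in> E \<and> \<pi> e = i) in \<beta> (snd e) / \<beta> (fst e)) else 1)"
  have T: "rescale_params E \<pi> \<beta> = (\<lambda>p j. c j * p j)"
    by (auto simp: rescale_params_def c_def fun_eq_iff Let_def)
  have EV: "E \<subseteq> V \<times> V" using net by (simp add: ff_net_def)
  have b1: "\<forall>v\<in>Vin \<union> Vout. \<beta> v = 1" using feas by (simp add: feasible_rescaling_def)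
  have bpos: "\<forall>v\<in>V. \<beta> v > 0" using feas by (auto simp: feasible_rescaling_def)
  have some: "(SOME e'. e' \<in> E \<and> \<pi> e' = \<pi> e) \<in> E \<and> \<pi> (SOME e'. e' \<in> E \<and> \<pi> e' = \<pi> e) = \<pi> e"
    if "e \<in> E" for e
    by (rule someI_ex) (use that in blast)
  have cE: "\<forall>e\<in>E. c (\<pi> e) = \<beta> (snd e) / \<beta> (fst e)"
  proof
    fix e assume e: "e \<in> E"
    have "c (\<pi> e) = (let e' = (SOME e'. e' \<in> E \<and> \<pi> e' = \<pi> e) in \<beta> (snd e') / \<beta> (fst e'))"
      using e by (auto simp: c_def)
    also have "\<dots> = \<beta> (snd e) / \<beta> (fst e)"
    proof -
      define e' where "e' = (SOME e'. e' \<in> E \<and> \<pi> e' = \<pi> e)"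
      have e': "e' \<in> E" "\<pi> e' = \<pi> e" using some[OF e] unfolding e'_def by auto
      have sh: "\<forall>e1\<in>E. \<forall>e2\<in>E. \<pi> e1 = \<pi> e2 \<longrightarrow> \<beta> (snd e1) / \<beta> (fst e1) = \<beta> (snd e2) / \<beta> (fst e2)"
        using feas unfolding feasible_rescaling_def by blast
      have "\<beta> (snd e') / \<beta> (fst e') = \<beta> (snd e) / \<beta> (fst e)"
        using sh e' e by blast
      then show ?thesis unfolding e'_def[symmetric] Let_def .
    qed
    finally show "c (\<pi> e) = \<beta> (snd e) / \<beta> (fst e)" .
  qed
  have cpos: "\<forall>i. c i > 0"
  proof
    fix i
    show "c i > 0"
    proof (cases "\<exists>e\<in>E. \<pi> e = i")
      case True
      then obtain e where e: "e \<in> E" "\<pi> e = i" by blast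
      then have "fst e \<in> V" "snd e \<in> V" using EV by auto
      then show ?thesis using cE e bpos by auto
    qed (simp add: c_def)
  qed
  interpret resc V Vin Vout E \<pi> c \<beta>
    by unfold_locales (use net cE bpos b1 cpos in auto)
  have P: "\<And>i p. partial L i (\<lambda>j. c j * p j) = partial L i p / c i"
    by (rule partial_scale[OF L_through_f L_diff])
  show "invariant_to V Vin Vout E \<pi> (scaled_update (kappa Vin Vout E \<pi>) L \<eta>)
             (rescale_params E \<pi> \<beta>) \<and>
           invariant_to V Vin Vout E \<pi> (scaled_update (kappa1 Vin Vout E \<pi>) L \<eta>)
             (rescale_params E \<pi> \<beta>)"
    unfolding T using invariant[where K="kappa Vin Vout E \<pi>" and L=L, OF kappa_scale P] invariant[where K="kappa1 Vin Vout E \<pi>" and L=L, OF kappa1_scale P] by blast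
qed

end
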